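(* Let $Z$ be a separable Banach space and let $g:U\to Z$ depend analytically on $\boldsymbol y\in U=[-\frac12,\frac12]^{\mathbb N}$. Suppose there exist constants $C_0>0$, $r_1\ge0$, $r_2>0$ and a sequence $\boldsymbol\rho=(\rho_j)_{j\ge1}\in\ell^p(\mathbb N)$ for some $0<p<1$ with $\rho_1\ge\rho_2\ge\cdots$, such that for all $\boldsymbol y\in U$ and $\boldsymbol\nu\in\mathscr F$, $$\|\partial^{\boldsymbol\nu}_{\boldsymbol y}g(\boldsymbol y)\|_Z\le C_0\,(|\boldsymbol\nu|+r_1)!\,(r_2\boldsymbol\rho)^{\boldsymbol\nu}.$$ Then for all $s\in\mathbb N$, $$\Big\|\int_U\big(g(\boldsymbol y)-g(\boldsymbol y_{\le s};\boldsymbol 0)\big)\,\mathrm d\boldsymbol y\Big\|_Z\le C_0\,C\,s^{-2/p+1},$$ where $C>0$ is independent of $s$ (and of $C_0$).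
   Context: $U=[-\frac12,\frac12]^{\mathbb N}$ carries the product of uniform probability measures $\mathrm d\boldsymbol y$, and integrals of $Z$-valued functions are Bochner integrals. $(\boldsymbol y_{\le s};\boldsymbol 0):=(y_1,\dots,y_s,0,0,\dots)$. $\mathscr F$ is the set of finitely supported multi-indices $\boldsymbol\nu\in\mathbb N_0^{\mathbb N}$, $|\boldsymbol\nu|=\sum_j\nu_j$, $\partial^{\boldsymbol\nu}_{\boldsymbol y}=\prod_j(\partial/\partial y_j)^{\nu_j}$, and $(r_2\boldsymbol\rho)^{\boldsymbol\nu}=\prod_j(r_2\rho_j)^{\nu_j}$. *)

theory Defs
  imports "HOL-Probability.Probability"
begin

text \<open>The parameter domain U = [-1/2,1/2]^N. Coordinates are indexed from 0:
  y j stands for the paper's y_(j+1).\<close>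
definition cubeU :: "(nat \<Rightarrow> real) set" where
  "cubeU = {y. \<forall>j. y j \<in> {-1/2..1/2}}"

definition cube_measure :: "(nat \<Rightarrow> real) measure" where
  "cube_measure = (\<Pi>\<^sub>M j\<in>(UNIV::nat set). uniform_measure lborel {-1/2..1/2::real})"

definition multi_indices :: "(nat \<Rightarrow> nat) set" where
  "multi_indices = {\<nu>. finite {j. \<nu> j \<noteq> 0}}"

definition mi_order :: "(nat \<Rightarrow> nat) \<Rightarrow> nat" where
  "mi_order \<nu> = (\<Sum>j\<in>{j. \<nu> j \<noteq> 0}. \<nu> j)"

definition mi_power :: "(nat \<Rightarrow> real) \<Rightarrow> (nat \<Rightarrow> nat) \<Rightarrow> real" where
  "mi_power b \<nu> = (\<Prod>j\<in>{j. \<nu> j \<noteq> 0}. b j ^ \<nu> j)"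

definition trunc :: "nat \<Rightarrow> (nat \<Rightarrow> real) \<Rightarrow> (nat \<Rightarrow> real)" where
  "trunc s y = (\<lambda>j. if j < s then y j else 0)"

text \<open>D is the family of all mixed partial derivatives of g on U:
  D 0 = g on U, and for every multi-index nu and coordinate j, the partial
  derivative in y_j of D nu is D (nu + e_j) (one-sided at the endpoints).\<close>
definition partial_derivatives ::
    "((nat \<Rightarrow> real) \<Rightarrow> 'z::real_normed_vector) \<Rightarrow> ((nat \<Rightarrow> nat) \<Rightarrow> (nat \<Rightarrow> real) \<Rightarrow> 'z) \<Rightarrow> bool" where
  "partial_derivatives g D \<longleftrightarrow>
     (\<forall>y\<in>cubeU. D (\<lambda>_. 0) y = g y) \<and>
     (\<forall>\<nu>\<in>multi_indices. \<forall>j. \<forall>y\<in>cubeU.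
        ((\<lambda>t. D \<nu> (y(j := t))) has_vector_derivative D (\<nu>(j := Suc (\<nu> j))) y)
          (at (y j) within {-1/2..1/2}))"

end

theory Submission
  imports Defs
begin


definition UM :: "real measure" where "UM = uniform_measure lborel {-1/2..1/2::real}"

lemma cm: "cube_measure = Pi\<^sub>M UNIV (\<lambda>i::nat. UM)" unfolding cube_measure_def UM_def by simp
lemma sets_UM[simp]: "sets UM = sets borel" and space_UM[simp]: "space UM = UNIV" by (auto simp: UM_def)

lemma UM_prob: "prob_space UM"
  unfolding UM_def by (rule prob_space_uniform_measure) auto

lemma UM_uminus: "distr UM UM uminus = UM"
proof (rule measure_eqI)
  fix A assume A: "A \<in> sets (distr UM UM uminus)"
  hence A': "A \<in> sets borel" by simp
  have m: "uminus -` A \<in> sets borel"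
  proof -
    have "(uminus::real\<Rightarrow>real) \<in> borel_measurable borel" by simp
    from measurable_sets[OF this A'] show ?thesis by simp
  qed
  have "emeasure lborel ({-1/2..1/2::real} \<inter> uminus -` A) = emeasure lborel ({-1/2..1/2} \<inter> A)"
  proof -
    have "{-1/2..1/2::real} \<inter> uminus -` A = uminus -` ({-1/2..1/2} \<inter> A)" by auto
    hence "emeasure lborel ({-1/2..1/2::real} \<inter> uminus -` A) = emeasure (distr lborel borel uminus) ({-1/2..1/2} \<inter> A)"
      using A' by (subst emeasure_distr) auto
    thus ?thesis by (simp add: lborel_distr_uminus)
  qed
  then show "emeasure (distr UM UM uminus) A = emeasure UM A"
    using A' m by (simp add: emeasure_distr UM_def)
qed simp

lemma sets_cube: "sets cube_measure = sets (borel :: (nat \<Rightarrow> real) measure)"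
proof -
  have "sets cube_measure = sets (Pi\<^sub>M UNIV (\<lambda>i::nat. borel::real measure))"
    unfolding cm by (rule sets_PiM_cong) auto
  thus ?thesis using sets_PiM_equal_borel by simp
qed

lemma space_cube: "space cube_measure = UNIV"
  using sets_cube sets_eq_imp_space_eq by fastforce

lemma cube_prob: "prob_space cube_measure"
  unfolding cm by (rule prob_space_PiM) (rule UM_prob)

lemma AE_cubeU: "AE y in cube_measure. y \<in> cubeU"
proof -
  have "AE y in cube_measure. \<forall>j. y j \<in> {-1/2..1/2}"
    unfolding AE_all_countable
  proof
    fix j
    show "AE y in cube_measure. y j \<in> {-1/2..1/2}"
      unfolding cube_measure_def
      by (rule AE_PiM_component) (auto intro!: AE_uniform_measureI prob_space_uniform_measure)
  qed
  thus ?thesis by (simp add: cubeU_def)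
qed

definition refl_at :: "nat \<Rightarrow> (nat \<Rightarrow> real) \<Rightarrow> (nat \<Rightarrow> real)" where
  "refl_at j y = y(j := - y j)"

lemma refl_at_cont: "continuous_on UNIV (refl_at j)"
  unfolding refl_at_def
  apply (intro continuous_on_coordinatewise_then_product)
  subgoal for i by (cases "i = j") (auto intro!: continuous_intros)
  done

lemma meas_cube: "continuous_on UNIV (f::(nat\<Rightarrow>real) \<Rightarrow> 'b::topological_space) \<Longrightarrow> f \<in> borel_measurable cube_measure"
  using borel_measurable_continuous_onI measurable_cong_sets[OF sets_cube refl] by blast

lemma refl_at_meas: "refl_at j \<in> measurable cube_measure cube_measure"
proof -
  have "refl_at j \<in> borel_measurable borel"
    by (rule borel_measurable_continuous_onI[OF refl_at_cont])
  thus ?thesis using sets_cube by (simp add: measurable_cong_sets[OF sets_cube sets_cube])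
qed

lemma UM_neg: "A \<in> sets borel \<Longrightarrow> emeasure UM (uminus -` A) = emeasure UM A"
proof -
  assume A: "A \<in> sets borel"
  have "emeasure UM A = emeasure (distr UM UM uminus) A" by (simp add: UM_uminus)
  also have "\<dots> = emeasure UM (uminus -` A)"
  proof -
    have "(uminus::real\<Rightarrow>real) \<in> measurable UM UM"
      using measurable_cong_sets[OF sets_UM sets_UM] by simp
    thus ?thesis using A by (simp add: emeasure_distr)
  qed
  finally show ?thesis by simp
qed

lemma refl_at_preserve: "distr cube_measure cube_measure (refl_at j) = cube_measure"
proof -
  let ?M = "\<lambda>i::nat. UM"
  show ?thesis
  proof (rule measure_eqI_PiM_infinite[where I=UNIV and M="?M"])
    show "sets (distr cube_measure cube_measure (refl_at j)) = sets (Pi\<^sub>M UNIV ?M)" by (simp add: cm)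
    show "sets cube_measure = sets (Pi\<^sub>M UNIV ?M)" by (simp add: cm)
    show "finite_measure (distr cube_measure cube_measure (refl_at j))"
      using cube_prob prob_space.finite_measure prob_space.prob_space_distr refl_at_meas by blast
  next
    fix A :: "nat \<Rightarrow> real set" and J :: "nat set"
    assume J: "finite J" "J \<subseteq> UNIV" and A: "\<And>i. i \<in> J \<Longrightarrow> A i \<in> sets UM"
    define A' where "A' i = (if i = j then uminus -` A i else A i)" for i
    have A'1: "A' i \<in> sets UM" if "i \<in> J" for i
    proof -
      have "(uminus::real\<Rightarrow>real) \<in> borel_measurable borel" by simp
      from measurable_sets[OF this, of "A i"] A[OF that] show ?thesis by (auto simp: A'_def)
    qed
    have pre: "refl_at j -` prod_emb UNIV ?M J (Pi\<^sub>E J A) \<inter> space cube_measure = prod_emb UNIV ?M J (Pi\<^sub>E J A')"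
      by (auto simp: prod_emb_def space_PiM space_cube PiE_iff refl_at_def A'_def split: if_splits)
    have "emeasure (distr cube_measure cube_measure (refl_at j)) (prod_emb UNIV ?M J (Pi\<^sub>E J A))
       = emeasure cube_measure (prod_emb UNIV ?M J (Pi\<^sub>E J A'))"
      apply (subst emeasure_distr[OF refl_at_meas])
      subgoal by (simp add: cm, rule sets_PiM_I, use J A in auto)
      subgoal by (simp only: pre)
      done
    also have "\<dots> = (\<Prod>i\<in>J. emeasure UM (A' i))"
      unfolding cm by (rule emeasure_PiM_emb) (use J A'1 UM_prob in auto)
    also have "\<dots> = (\<Prod>i\<in>J. emeasure UM (A i))"
      by (rule prod.cong) (use A in \<open>auto simp: A'_def UM_neg\<close>)
    also have "\<dots> = emeasure cube_measure (prod_emb UNIV ?M J (Pi\<^sub>E J A))"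
      unfolding cm by (rule emeasure_PiM_emb[symmetric]) (use J A UM_prob in auto)
    finally show "emeasure (distr cube_measure cube_measure (refl_at j)) (prod_emb UNIV ?M J (Pi\<^sub>E J A)) =
      emeasure cube_measure (prod_emb UNIV ?M J (Pi\<^sub>E J A))" .
  qed
qed



lemma mvt_vec:
  fixes F F1 :: "real \<Rightarrow> 'z::real_normed_vector"
  assumes "convex S"
    and d: "\<And>t. t \<in> S \<Longrightarrow> (F has_vector_derivative F1 t) (at t within S)"
    and b: "\<And>t. t \<in> S \<Longrightarrow> norm (F1 t) \<le> B"
    and "x \<in> S" "y \<in> S"
  shows "norm (F x - F y) \<le> B * \<bar>x - y\<bar>"
proof -
  have "norm (F x - F y) \<le> B * norm (x - y)"
  proof (rule differentiable_bound[OF assms(1), where f'="\<lambda>t h. h *\<^sub>R F1 t"])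
    show "(F has_derivative (\<lambda>h. h *\<^sub>R F1 t)) (at t within S)" if "t \<in> S" for t
      using d[OF that] by (simp add: has_vector_derivative_def)
    show "onorm (\<lambda>h. h *\<^sub>R F1 t) \<le> B" if "t \<in> S" for t
    proof -
      show ?thesis
      proof (rule onorm_le)
        fix h :: real
        show "norm (h *\<^sub>R F1 t) \<le> B * norm h"
          using mult_left_mono[OF b[OF that] abs_ge_zero[of h]] by (simp add: mult.commute)
      qed
    qed
  qed (use assms in auto)
  thus ?thesis by simp
qed

lemma second_order:
  fixes F F1 F2 :: "real \<Rightarrow> 'z::real_normed_vector"
  assumes d1: "\<And>t. t \<in> {-1/2..1/2} \<Longrightarrow> (F has_vector_derivative F1 t) (at t within {-1/2..1/2})"
    and d2: "\<And>t. t \<in> {-1/2..1/2} \<Longrightarrow> (F1 has_vector_derivative F2 t) (at t within {-1/2..1/2})"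
    and b: "\<And>t. t \<in> {-1/2..1/2} \<Longrightarrow> norm (F2 t) \<le> B"
    and t: "t \<in> {-1/2..1/2::real}"
  shows "norm (F t + F (-t) - 2 *\<^sub>R F 0) \<le> 2 * B * t^2"
proof -
  define S where "S = {-\<bar>t\<bar>..\<bar>t\<bar>}"
  have SI: "S \<subseteq> {-1/2..1/2}" using t by (auto simp: S_def)
  have negS: "uminus ` S = S"
    by (auto simp: S_def image_iff intro!: exI[where x="- _"])
  have B0: "B \<ge> 0" using order_trans[OF norm_ge_zero b[of 0]] by simp
  have K: "((\<lambda>u. F u + F (-u)) has_vector_derivative (F1 u - F1 (-u))) (at u within S)" if u: "u \<in> S" for u
  proof -
    have uI: "u \<in> {-1/2..1/2}" "-u \<in> {-1/2..1/2}" using SI u negS by auto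
    have "(F has_vector_derivative F1 u) (at u within S)"
      using has_vector_derivative_within_subset[OF d1[OF uI(1)] SI] .
    moreover have "((F \<circ> uminus) has_vector_derivative ((-1) *\<^sub>R F1 (-u))) (at u within S)"
    proof (rule vector_diff_chain_within)
      show "(uminus has_vector_derivative -1) (at u within S)"
        by (auto intro!: derivative_eq_intros)
      show "(F has_vector_derivative F1 (- u)) (at (- u) within uminus ` S)"
        unfolding negS using has_vector_derivative_within_subset[OF d1[OF uI(2)] SI] .
    qed
    ultimately show ?thesis
      by (auto intro!: derivative_eq_intros simp: o_def)
  qed
  have Kb: "norm (F1 u - F1 (-u)) \<le> 2 * B * \<bar>t\<bar>" if u: "u \<in> S" for u
  proof -
    have "norm (F1 u - F1 (-u)) \<le> B * \<bar>u - (-u)\<bar>"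
      by (rule mvt_vec[OF _ d2 b]) (use u SI negS in auto)
    also have "\<dots> \<le> 2 * B * \<bar>t\<bar>"
    proof -
      have "\<bar>u - (-u)\<bar> \<le> 2 * \<bar>t\<bar>" using u by (auto simp: S_def)
      from mult_left_mono[OF this B0] show ?thesis by simp
    qed
    finally show ?thesis .
  qed
  have "norm ((F t + F (-t)) - (F 0 + F (-0))) \<le> (2 * B * \<bar>t\<bar>) * \<bar>t - 0\<bar>"
    by (rule mvt_vec[where F="\<lambda>u. F u + F (-u)", OF _ K Kb]) (auto simp: S_def)
  note le = this
  have e1: "F t + F (-t) - (F 0 + F (-0)) = F t + F (-t) - 2 *\<^sub>R F 0"
    by (simp add: scaleR_2)
  have e2: "(2 * B * \<bar>t\<bar>) * \<bar>t - 0\<bar> = 2 * B * t^2"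
    by (simp add: power2_eq_square abs_mult_self_eq)
  show ?thesis using le unfolding e1 e2 .
qed



definition ej :: "nat \<Rightarrow> nat \<Rightarrow> nat" where "ej j = (\<lambda>_. 0)(j := 1)"

lemma supp_single: "k \<noteq> 0 \<Longrightarrow> {i. ((\<lambda>_. 0::nat)(j := k)) i \<noteq> 0} = {j}" by auto

lemma ej_facts:
  "ej j \<in> multi_indices" "mi_order (ej j) = 1" "mi_power b (ej j) = b j"
  "(ej j)(j := Suc (ej j j)) = (\<lambda>_. 0)(j := 2)"
  "((\<lambda>_. 0::nat)(j := 2)) \<in> multi_indices" "mi_order ((\<lambda>_. 0)(j := 2)) = 2"
  "mi_power b ((\<lambda>_. 0)(j := 2)) = b j ^ 2"
  unfolding ej_def multi_indices_def mi_order_def mi_power_def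
  by (simp_all add: supp_single numeral_2_eq_2)

lemma zero_mi: "(\<lambda>_. 0::nat) \<in> multi_indices" "(\<lambda>_. 0::nat)(j := Suc 0) = ej j"
  by (auto simp: multi_indices_def ej_def)

lemma upd_cubeU: "a \<in> cubeU \<Longrightarrow> t \<in> {-1/2..1/2} \<Longrightarrow> a(j := t) \<in> cubeU"
  by (auto simp: cubeU_def)

lemma g_deriv:
  assumes pd: "partial_derivatives g D" and a: "a \<in> cubeU" and t: "t \<in> {-1/2..1/2::real}"
  shows "((\<lambda>t. g (a(j:=t))) has_vector_derivative D (ej j) (a(j:=t))) (at t within {-1/2..1/2})"
    and "((\<lambda>t. D (ej j) (a(j:=t))) has_vector_derivative D ((\<lambda>_. 0)(j := 2)) (a(j:=t))) (at t within {-1/2..1/2})"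
proof -
  have pd2: "\<forall>\<nu>\<in>multi_indices. \<forall>j. \<forall>y\<in>cubeU.
        ((\<lambda>t. D \<nu> (y(j := t))) has_vector_derivative D (\<nu>(j := Suc (\<nu> j))) y)
          (at (y j) within {-1/2..1/2})" and pd1: "\<forall>y\<in>cubeU. D (\<lambda>_. 0) y = g y"
    using pd unfolding partial_derivatives_def by blast+
  let ?y = "a(j := t)"
  have y: "?y \<in> cubeU" by (rule upd_cubeU[OF a t])
  have "((\<lambda>t'. D (\<lambda>_. 0) (?y(j := t'))) has_vector_derivative D ((\<lambda>_. 0)(j := Suc 0)) ?y) (at (?y j) within {-1/2..1/2})"
    using bspec[OF pd2 zero_mi(1), THEN spec[of _ j], THEN bspec, OF y] by simp
  hence h: "((\<lambda>t'. D (\<lambda>_. 0) (a(j := t'))) has_vector_derivative D (ej j) ?y) (at t within {-1/2..1/2})"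
    unfolding zero_mi(2) fun_upd_upd fun_upd_same .
  show "((\<lambda>t. g (a(j:=t))) has_vector_derivative D (ej j) (a(j:=t))) (at t within {-1/2..1/2})"
  proof (rule has_vector_derivative_transform_within[OF h zero_less_one t])
    fix x' assume "x' \<in> {-1/2..1/2::real}"
    hence "a(j := x') \<in> cubeU" by (rule upd_cubeU[OF a])
    thus "D (\<lambda>_. 0) (a(j := x')) = g (a(j := x'))" using pd1 by blast
  qed
  have "((\<lambda>t'. D (ej j) (?y(j := t'))) has_vector_derivative D ((ej j)(j := Suc (ej j j))) ?y) (at (?y j) within {-1/2..1/2})"
    using bspec[OF pd2 ej_facts(1), THEN spec[of _ j], THEN bspec, OF y] .
  thus "((\<lambda>t. D (ej j) (a(j:=t))) has_vector_derivative D ((\<lambda>_. 0)(j := 2)) (a(j:=t))) (at t within {-1/2..1/2})"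
    unfolding ej_facts(4) fun_upd_upd fun_upd_same .
qed

locale setting =
  fixes C0 r1 r2 :: real and rho :: "nat \<Rightarrow> real"
    and g :: "(nat \<Rightarrow> real) \<Rightarrow> 'z::{banach, second_countable_topology}"
    and D :: "(nat \<Rightarrow> nat) \<Rightarrow> (nat \<Rightarrow> real) \<Rightarrow> 'z"
  assumes C0: "C0 > 0" and r1: "r1 \<ge> 0" and rho0: "\<And>j. rho j \<ge> 0"
    and cont: "continuous_on cubeU g" and pd: "partial_derivatives g D"
    and bd: "\<forall>y\<in>cubeU. \<forall>\<nu>\<in>multi_indices.
         norm (D \<nu> y) \<le> C0 * Gamma (real (mi_order \<nu>) + r1 + 1) * mi_power (\<lambda>j. r2 * rho j) \<nu>"
begin

definition L :: "nat \<Rightarrow> real" where "L j = C0 * Gamma (r1 + 2) * \<bar>r2 * rho j\<bar>"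
definition Q :: "nat \<Rightarrow> real" where "Q j = C0 * Gamma (r1 + 3) * (r2 * rho j)^2"

lemma G2: "Gamma (r1 + 2) > 0" "Gamma (r1 + 3) > 0" using r1 by (auto intro!: Gamma_real_pos)
lemma L_nonneg: "L j \<ge> 0" unfolding L_def using C0 G2 by simp
lemma Q_nonneg: "Q j \<ge> 0" unfolding Q_def using C0 G2 by simp

lemma bd1: "y \<in> cubeU \<Longrightarrow> norm (D (ej j) y) \<le> L j"
proof -
  assume y: "y \<in> cubeU"
  have "norm (D (ej j) y) \<le> C0 * Gamma (real 1 + r1 + 1) * (r2 * rho j)"
    using bspec[OF bspec[OF bd y] ej_facts(1)] unfolding ej_facts(2,3) .
  also have "real 1 + r1 + 1 = r1 + 2" by simp
  also have "C0 * Gamma (r1 + 2) * (r2 * rho j) \<le> L j" unfolding L_def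
    using mult_left_mono[OF abs_ge_self[of "r2 * rho j"], of "C0 * Gamma (r1 + 2)"] C0 G2 by simp
  finally show ?thesis .
qed

lemma bd2: "y \<in> cubeU \<Longrightarrow> norm (D ((\<lambda>_. 0)(j := 2)) y) \<le> Q j"
proof -
  assume y: "y \<in> cubeU"
  have "norm (D ((\<lambda>_. 0)(j := 2)) y) \<le> C0 * Gamma (real 2 + r1 + 1) * (r2 * rho j)^2"
    using bspec[OF bspec[OF bd y] ej_facts(5)] unfolding ej_facts(6,7) .
  also have "real 2 + r1 + 1 = r1 + 3" by simp
  finally show ?thesis unfolding Q_def .
qed

lemma P1:
  assumes a: "a \<in> cubeU" and x: "x \<in> {-1/2..1/2}" and y: "y \<in> {-1/2..1/2}"
  shows "norm (g (a(j:=x)) - g (a(j:=y))) \<le> L j * \<bar>x - y\<bar>"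
proof (rule mvt_vec[where S="{-1/2..1/2}"])
  show "convex {-1/2..1/2::real}" by simp
  show "((\<lambda>t. g (a(j:=t))) has_vector_derivative D (ej j) (a(j:=t))) (at t within {-1/2..1/2})"
    if "t \<in> {-1/2..1/2}" for t using g_deriv(1)[OF pd a that] .
  show "norm (D (ej j) (a(j:=t))) \<le> L j" if "t \<in> {-1/2..1/2}" for t
    using bd1[OF upd_cubeU[OF a that]] .
qed (fact x, fact y)

lemma P2:
  assumes a: "a \<in> cubeU" and t: "t \<in> {-1/2..1/2}"
  shows "norm (g (a(j:=t)) + g (a(j:=-t)) - 2 *\<^sub>R g (a(j:=0))) \<le> 2 * Q j * t^2"
proof (rule second_order[where F="\<lambda>t. g (a(j:=t))"])
  show "((\<lambda>t. g (a(j:=t))) has_vector_derivative D (ej j) (a(j:=t))) (at t within {-1/2..1/2})"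
    if "t \<in> {-1/2..1/2}" for t using g_deriv(1)[OF pd a that] .
  show "((\<lambda>t. D (ej j) (a(j:=t))) has_vector_derivative D ((\<lambda>_. 0)(j := 2)) (a(j:=t))) (at t within {-1/2..1/2})"
    if "t \<in> {-1/2..1/2}" for t using g_deriv(2)[OF pd a that] .
  show "norm (D ((\<lambda>_. 0)(j := 2)) (a(j:=t))) \<le> Q j" if "t \<in> {-1/2..1/2}" for t
    using bd2[OF upd_cubeU[OF a that]] .
qed (fact t)

end


definition clamp :: "(nat \<Rightarrow> real) \<Rightarrow> (nat \<Rightarrow> real)" where
  "clamp y = (\<lambda>i. max (-1/2) (min (1/2) (y i)))"

lemma clamp_in: "clamp y \<in> cubeU" by (auto simp: clamp_def cubeU_def)
lemma clamp_id: "y \<in> cubeU \<Longrightarrow> clamp y = y"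
  by (auto simp: clamp_def cubeU_def fun_eq_iff)
lemma clamp_cont: "continuous_on UNIV clamp"
  unfolding clamp_def by (intro continuous_on_coordinatewise_then_product continuous_intros continuous_on_product_coordinates)
lemma clamp_refl: "clamp (refl_at j y) = refl_at j (clamp y)"
  by (auto simp: clamp_def refl_at_def fun_eq_iff)
lemma trunc_cubeU: "y \<in> cubeU \<Longrightarrow> trunc k y \<in> cubeU" by (auto simp: trunc_def cubeU_def)
lemma trunc_Suc: "trunc (Suc j) y = (trunc j y)(j := y j)" by (auto simp: trunc_def fun_eq_iff)
lemma trunc_upd0: "(trunc j y)(j := 0) = trunc j y" by (auto simp: trunc_def fun_eq_iff)
lemma trunc_refl: "trunc j (refl_at j y) = trunc j y" "refl_at j y j = - y j"
  by (auto simp: trunc_def refl_at_def fun_eq_iff)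
lemma trunc_cont: "continuous_on UNIV (trunc k)"
  unfolding trunc_def
  apply (intro continuous_on_coordinatewise_then_product)
  subgoal for i by (cases "i < k") (auto intro!: continuous_intros)
  done
lemma trunc_lim: "(\<lambda>n. trunc n y) \<longlonglongrightarrow> y"
proof -
  have "limitin (product_topology (\<lambda>i. euclidean) UNIV) (\<lambda>n. trunc n y) y sequentially"
    unfolding limitin_componentwise
  proof (intro conjI ballI)
    fix i :: nat
    have "eventually (\<lambda>n. trunc n y i = y i) sequentially"
      unfolding eventually_sequentially by (rule exI[of _ "Suc i"]) (auto simp: trunc_def)
    hence "((\<lambda>n. trunc n y i) \<longlongrightarrow> y i) sequentially" by (rule tendsto_eventually)
    thus "limitin euclidean (\<lambda>n. trunc n y i) (y i) sequentially" by simp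
  qed auto
  thus ?thesis unfolding euclidean_product_topology by simp
qed
lemma cubeU_half: "y \<in> cubeU \<Longrightarrow> y j \<in> {-1/2..1/2}" by (auto simp: cubeU_def)

context setting begin

definition H :: "nat \<Rightarrow> (nat \<Rightarrow> real) \<Rightarrow> 'z" where
  "H j y = g (trunc (Suc j) (clamp y)) - g (trunc j (clamp y))"

lemma P3: "norm (H j y + H j (refl_at j y)) \<le> Q j / 2"
proof -
  define c where "c = clamp y"
  define a where "a = trunc j c"
  define t where "t = c j"
  have a: "a \<in> cubeU" unfolding a_def c_def by (rule trunc_cubeU[OF clamp_in])
  have t: "t \<in> {-1/2..1/2}" unfolding t_def c_def by (rule cubeU_half[OF clamp_in])
  have e1: "H j y = g (a(j:=t)) - g (a(j:=0))"
    unfolding H_def c_def[symmetric] a_def t_def trunc_Suc trunc_upd0 ..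
  have e2: "H j (refl_at j y) = g (a(j:=-t)) - g (a(j:=0))"
    unfolding H_def clamp_refl c_def[symmetric] a_def t_def trunc_Suc trunc_upd0 trunc_refl ..
  have "H j y + H j (refl_at j y) = g (a(j:=t)) + g (a(j:=-t)) - 2 *\<^sub>R g (a(j:=0))"
    unfolding e1 e2 by (simp add: scaleR_2 algebra_simps)
  hence "norm (H j y + H j (refl_at j y)) \<le> 2 * Q j * t^2" using P2[OF a t] by simp
  also have "\<dots> \<le> 2 * Q j * (1/4)"
  proof -
    have "t^2 \<le> (1/2)^2" using t by (subst power2_le_iff_abs_le) auto
    thus ?thesis using Q_nonneg[of j] by (intro mult_left_mono) (auto simp: power2_eq_square)
  qed
  finally show ?thesis by simp
qed

lemma P4: "norm (H j y) \<le> L j / 2"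
proof -
  define c where "c = clamp y"
  define a where "a = trunc j c"
  define t where "t = c j"
  have a: "a \<in> cubeU" unfolding a_def c_def by (rule trunc_cubeU[OF clamp_in])
  have t: "t \<in> {-1/2..1/2}" unfolding t_def c_def by (rule cubeU_half[OF clamp_in])
  have e1: "H j y = g (a(j:=t)) - g (a(j:=0))"
    unfolding H_def c_def[symmetric] a_def t_def trunc_Suc trunc_upd0 ..
  have "norm (H j y) \<le> L j * \<bar>t - 0\<bar>" unfolding e1 by (rule P1[OF a t]) simp
  also have "\<dots> \<le> L j * (1/2)" using t L_nonneg[of j] by (intro mult_left_mono) auto
  finally show ?thesis by simp
qed

end


lemma prob_norm_int_le:
  fixes f :: "'a \<Rightarrow> 'b::{banach, second_countable_topology}"
  assumes P: "prob_space M" and f: "f \<in> borel_measurable M"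
    and b: "\<And>x. x \<in> space M \<Longrightarrow> norm (f x) \<le> B"
  shows "norm (integral\<^sup>L M f) \<le> B"
proof -
  interpret prob_space M by (rule P)
  have i: "integrable M f"
    by (rule integrable_const_bound[where B=B]) (use b f in auto)
  have "norm (integral\<^sup>L M f) \<le> (\<integral>x. norm (f x) \<partial>M)" by (rule integral_norm_bound)
  also have "\<dots> \<le> (\<integral>x. B \<partial>M)"
    by (rule integral_mono) (use i b in auto)
  also have "\<dots> = B" by (simp add: prob_space)
  finally show ?thesis .
qed

lemma prob_integrable:
  fixes f :: "'a \<Rightarrow> 'b::{banach, second_countable_topology}"
  assumes P: "prob_space M" and f: "f \<in> borel_measurable M"
    and b: "\<And>x. x \<in> space M \<Longrightarrow> norm (f x) \<le> B"
  shows "integrable M f"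
proof -
  interpret prob_space M by (rule P)
  show ?thesis by (rule integrable_const_bound[where B=B]) (use b f in auto)
qed

context setting begin

definition T :: "nat \<Rightarrow> real" where "T m = (\<Sum>k. L (k + m))"

lemma tele:
  assumes y: "y \<in> cubeU" and mn: "m \<le> n"
  shows "norm (g (trunc n y) - g (trunc m y)) \<le> (\<Sum>j\<in>{m..<n}. L j) / 2"
  using mn
proof (induction n rule: dec_induct)
  case base then show ?case by simp
next
  case (step k)
  have a: "trunc k y \<in> cubeU" by (rule trunc_cubeU[OF y])
  have "norm (g ((trunc k y)(k := y k)) - g ((trunc k y)(k := 0))) \<le> L k * \<bar>y k - 0\<bar>"
    by (rule P1[OF a cubeU_half[OF y]]) simp
  hence "norm (g (trunc (Suc k) y) - g (trunc k y)) \<le> L k * \<bar>y k - 0\<bar>"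
    unfolding trunc_Suc[symmetric] trunc_upd0 .
  also have "\<dots> \<le> L k * (1/2)"
    using cubeU_half[OF y, of k] L_nonneg[of k] by (intro mult_left_mono) auto
  finally have h1: "norm (g (trunc (Suc k) y) - g (trunc k y)) \<le> L k / 2" by simp
  have "norm (g (trunc (Suc k) y) - g (trunc m y))
      \<le> norm (g (trunc (Suc k) y) - g (trunc k y)) + norm (g (trunc k y) - g (trunc m y))"
    by (rule norm_diff_triangle_le[OF order_refl order_refl])
  also have "\<dots> \<le> L k / 2 + (\<Sum>j\<in>{m..<k}. L j) / 2" using h1 step.IH by simp
  also have "\<dots> = (\<Sum>j\<in>{m..<Suc k}. L j) / 2"
    using step.hyps(1) by (simp add: sum.atLeastLessThan_Suc)
  finally show ?case .
qed

lemma P5: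
  assumes sL: "summable L" and y: "y \<in> cubeU"
  shows "norm (g y - g (trunc m y)) \<le> T m / 2"
proof (rule LIMSEQ_le_const2)
  have "(\<lambda>n. trunc (n + m) y) \<longlonglongrightarrow> y"
    using LIMSEQ_ignore_initial_segment[OF trunc_lim[of y], where k=m] .
  hence "(\<lambda>n. g (trunc (n + m) y)) \<longlonglongrightarrow> g y"
    by (rule continuous_on_tendsto_compose[OF cont _ y]) (simp add: trunc_cubeU[OF y])
  thus "(\<lambda>n. norm (g (trunc (n + m) y) - g (trunc m y))) \<longlonglongrightarrow> norm (g y - g (trunc m y))"
    by (intro tendsto_intros)
  show "\<exists>N. \<forall>n\<ge>N. norm (g (trunc (n + m) y) - g (trunc m y)) \<le> T m / 2"
  proof (intro exI allI impI)
    fix n :: nat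
    have "norm (g (trunc (n + m) y) - g (trunc m y)) \<le> (\<Sum>j\<in>{m..<n+m}. L j) / 2"
      by (rule tele[OF y]) simp
    also have "(\<Sum>j\<in>{m..<n+m}. L j) = (\<Sum>k\<in>{0..<n}. L (k + m))"
      using sum.shift_bounds_nat_ivl[of L 0 m n] by simp
    also have "\<dots> \<le> T m" unfolding T_def
      by (rule sum_le_suminf) (use summable_ignore_initial_segment[OF sL, of m] L_nonneg in auto)
    finally show "norm (g (trunc (n + m) y) - g (trunc m y)) \<le> T m / 2" by simp
  qed
qed

end


context setting begin

definition Gk :: "nat \<Rightarrow> (nat \<Rightarrow> real) \<Rightarrow> 'z" where "Gk k y = g (trunc k (clamp y))"
definition G :: "(nat \<Rightarrow> real) \<Rightarrow> 'z" where "G y = g (clamp y)"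

lemma Gk_cont: "continuous_on UNIV (Gk k)"
proof -
  have c: "continuous_on UNIV (\<lambda>y. trunc k (clamp y))"
    by (rule continuous_on_compose2[OF trunc_cont clamp_cont]) auto
  show ?thesis unfolding Gk_def
    by (rule continuous_on_compose2[OF cont c]) (auto intro: trunc_cubeU clamp_in)
qed

lemma G_cont: "continuous_on UNIV G"
  unfolding G_def by (rule continuous_on_compose2[OF cont clamp_cont]) (auto intro: clamp_in)

lemma H_eq: "H j = (\<lambda>y. Gk (Suc j) y - Gk j y)"
  by (auto simp: H_def Gk_def fun_eq_iff)

lemma meas: "Gk k \<in> borel_measurable cube_measure" "G \<in> borel_measurable cube_measure"
   "H j \<in> borel_measurable cube_measure"
  using meas_cube[OF Gk_cont] meas_cube[OF G_cont] unfolding H_eq by auto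

lemma g_bound: assumes sL: "summable L" and z: "z \<in> cubeU"
  shows "norm (g z) \<le> norm (g (\<lambda>_. 0)) + T 0 / 2"
proof -
  have "norm (g z - g (trunc 0 z)) \<le> T 0 / 2" by (rule P5[OF sL z])
  moreover have "trunc 0 z = (\<lambda>_. 0)" by (simp add: trunc_def)
  ultimately show ?thesis using norm_triangle_sub[of "g z" "g (\<lambda>_. 0)"] by simp
qed

lemma integrables: assumes sL: "summable L"
  shows "integrable cube_measure (Gk k)" "integrable cube_measure G" "integrable cube_measure (H j)"
    "integrable cube_measure (\<lambda>y. H j (refl_at j y))"
proof -
  show "integrable cube_measure (Gk k)"
    by (rule prob_integrable[OF cube_prob meas(1)]) (auto simp: Gk_def intro!: g_bound[OF sL] trunc_cubeU clamp_in)
  show "integrable cube_measure G"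
    by (rule prob_integrable[OF cube_prob meas(2)]) (auto simp: G_def intro!: g_bound[OF sL] clamp_in)
  show "integrable cube_measure (H j)"
    by (rule prob_integrable[OF cube_prob meas(3) P4])
  have "(\<lambda>y. H j (refl_at j y)) \<in> borel_measurable cube_measure"
    by (rule measurable_compose[OF refl_at_meas meas(3)])
  thus "integrable cube_measure (\<lambda>y. H j (refl_at j y))"
    by (rule prob_integrable[OF cube_prob _ P4])
qed

lemma int_H: assumes sL: "summable L" shows "norm (integral\<^sup>L cube_measure (H j)) \<le> Q j / 4"
proof -
  have "integral\<^sup>L cube_measure (H j) = integral\<^sup>L (distr cube_measure cube_measure (refl_at j)) (H j)"
    by (simp add: refl_at_preserve)
  also have "\<dots> = (\<integral>y. H j (refl_at j y) \<partial>cube_measure)"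
    by (rule integral_distr[OF refl_at_meas meas(3)])
  finally have e: "integral\<^sup>L cube_measure (H j) = (\<integral>y. H j (refl_at j y) \<partial>cube_measure)" .
  have "(\<integral>y. H j y + H j (refl_at j y) \<partial>cube_measure) = integral\<^sup>L cube_measure (H j) + integral\<^sup>L cube_measure (H j)"
    using integrables[OF sL] e by simp
  moreover have "norm (\<integral>y. H j y + H j (refl_at j y) \<partial>cube_measure) \<le> Q j / 2"
    by (rule prob_norm_int_le[OF cube_prob _ P3])
       (use meas(3) measurable_compose[OF refl_at_meas meas(3)] in auto)
  ultimately have "norm (2 *\<^sub>R integral\<^sup>L cube_measure (H j)) \<le> Q j / 2" by (simp add: scaleR_2)
  thus ?thesis by simp
qed

lemma main_int: assumes sL: "summable L" and sm: "s \<le> m"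
  shows "norm (\<integral>y. G y - Gk s y \<partial>cube_measure) \<le> (\<Sum>j\<in>{s..<m}. Q j) / 4 + T m / 2"
proof -
  have pw: "G y - Gk s y = (\<Sum>j\<in>{s..<m}. H j y) + (G y - Gk m y)" for y
  proof -
    have "(\<Sum>j\<in>{s..<m}. H j y) = (\<Sum>j = s..<m. Gk (Suc j) y - Gk j y)" by (simp add: H_eq)
    also have "\<dots> = Gk m y - Gk s y" by (rule sum_Suc_diff'[OF sm])
    finally show ?thesis by simp
  qed
  have I: "integrable cube_measure (\<lambda>y. \<Sum>j\<in>{s..<m}. H j y)" "integrable cube_measure (\<lambda>y. G y - Gk m y)"
    using integrables[OF sL] by auto
  have "(\<integral>y. G y - Gk s y \<partial>cube_measure) = (\<integral>y. (\<Sum>j\<in>{s..<m}. H j y) + (G y - Gk m y) \<partial>cube_measure)"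
    unfolding pw ..
  also have "\<dots> = (\<Sum>j\<in>{s..<m}. integral\<^sup>L cube_measure (H j)) + (\<integral>y. G y - Gk m y \<partial>cube_measure)"
    using I Bochner_Integration.integral_sum[where I="{s..<m}" and f=H] integrables(3)[OF sL] by simp
  finally have e: "(\<integral>y. G y - Gk s y \<partial>cube_measure) = \<dots>" .
  have n1: "norm (\<Sum>j\<in>{s..<m}. integral\<^sup>L cube_measure (H j)) \<le> (\<Sum>j\<in>{s..<m}. Q j) / 4"
  proof -
    have "norm (\<Sum>j\<in>{s..<m}. integral\<^sup>L cube_measure (H j)) \<le> (\<Sum>j\<in>{s..<m}. norm (integral\<^sup>L cube_measure (H j)))"
      by (rule norm_sum)
    also have "\<dots> \<le> (\<Sum>j\<in>{s..<m}. Q j / 4)" by (rule sum_mono) (rule int_H[OF sL])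
    finally show ?thesis by (simp add: sum_divide_distrib)
  qed
  have n2: "norm (\<integral>y. G y - Gk m y \<partial>cube_measure) \<le> T m / 2"
  proof (rule prob_norm_int_le[OF cube_prob])
    show "(\<lambda>y. G y - Gk m y) \<in> borel_measurable cube_measure" using meas by simp
    show "norm (G y - Gk m y) \<le> T m / 2" for y
      unfolding G_def Gk_def by (rule P5[OF sL clamp_in])
  qed
  show ?thesis unfolding e using norm_triangle_le[OF add_mono[OF n1 n2]] .
qed

lemma lim_int: assumes sL: "summable L" and W: "\<And>m. s \<le> m \<Longrightarrow> (\<Sum>j\<in>{s..<m}. Q j) \<le> W"
  shows "norm (\<integral>y. G y - Gk s y \<partial>cube_measure) \<le> W / 4"
proof (rule LIMSEQ_le_const)
  have "T \<longlonglongrightarrow> 0" unfolding T_def by (rule suminf_exist_split2[OF sL])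
  thus "(\<lambda>m. W / 4 + T m / 2) \<longlonglongrightarrow> W / 4" by (auto intro!: tendsto_eq_intros)
  show "\<exists>N. \<forall>m\<ge>N. norm (\<integral>y. G y - Gk s y \<partial>cube_measure) \<le> W / 4 + T m / 2"
  proof (intro exI allI impI)
    fix m assume "s \<le> m"
    from main_int[OF sL this] W[OF this]
    show "norm (\<integral>y. G y - Gk s y \<partial>cube_measure) \<le> W / 4 + T m / 2" by simp
  qed
qed

lemma final_local: assumes sL: "summable L" and W: "\<And>m. s \<le> m \<Longrightarrow> (\<Sum>j\<in>{s..<m}. Q j) \<le> W"
  shows "norm (\<integral>y. g y - g (trunc s y) \<partial>cube_measure) \<le> W / 4"
proof (cases "integrable cube_measure (\<lambda>y. g y - g (trunc s y))")
  case True
  have "(\<integral>y. g y - g (trunc s y) \<partial>cube_measure) = (\<integral>y. G y - Gk s y \<partial>cube_measure)"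
  proof (rule integral_cong_AE)
    show "(\<lambda>y. g y - g (trunc s y)) \<in> borel_measurable cube_measure" using True by auto
    show "(\<lambda>y. G y - Gk s y) \<in> borel_measurable cube_measure" using meas by simp
    show "AE y in cube_measure. g y - g (trunc s y) = G y - Gk s y"
      using AE_cubeU by eventually_elim (simp add: G_def Gk_def clamp_id)
  qed
  thus ?thesis using lim_int[OF sL W] by simp
next
  case False
  have "0 \<le> W" using W[of s] by simp
  thus ?thesis using False by (simp add: not_integrable_integral_eq)
qed

end


lemma step_bound:
  fixes q x :: real assumes q: "q > 1" and x: "x \<ge> 1"
  shows "(x + 1) powr (-q) \<le> (x powr (1-q) - (x+1) powr (1-q)) / (q - 1)"
proof -
  have "\<exists>z. x < z \<and> z < x + 1 \<and> ((x+1) powr (1-q) - x powr (1-q) = ((x+1) - x) * ((1-q) * z powr (1 - q - 1)))"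
  proof (rule MVT2)
    show "x < x + 1" by simp
    fix z assume "x \<le> z" "z \<le> x + 1"
    hence "z > 0" using x by simp
    thus "((\<lambda>z. z powr (1-q)) has_real_derivative (1-q) * z powr (1 - q - 1)) (at z)"
      by (rule has_real_derivative_powr)
  qed
  then obtain z where z: "x < z" "z < x + 1"
    and e: "(x+1) powr (1-q) - x powr (1-q) = (1-q) * z powr (-q)" by auto
  have "(x + 1) powr (-q) \<le> z powr (-q)"
    by (rule powr_mono2') (use q x z in auto)
  hence "(q - 1) * (x + 1) powr (-q) \<le> (q - 1) * z powr (-q)"
    using q by (intro mult_left_mono) auto
  also have "\<dots> = x powr (1-q) - (x+1) powr (1-q)" using e by (simp add: algebra_simps)
  finally show ?thesis using q by (simp add: field_simps)
qed

lemma sum_bound: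
  fixes q :: real assumes q: "q > 1" and s: "s \<ge> 1"
  shows "(\<Sum>j\<in>{s..<m}. (real j + 1) powr (-q)) \<le> real s powr (1-q) / (q - 1)"
proof (cases "s \<le> m")
  case True
  define f where "f j = real j powr (1-q)" for j :: nat
  have "(\<Sum>j\<in>{s..<m}. (real j + 1) powr (-q)) \<le> (\<Sum>j\<in>{s..<m}. (f j - f (Suc j)) / (q - 1))"
  proof (rule sum_mono)
    fix j assume "j \<in> {s..<m}"
    hence "real j \<ge> 1" using s by auto
    from step_bound[OF q this] show "(real j + 1) powr (-q) \<le> (f j - f (Suc j)) / (q - 1)"
      by (simp add: f_def add.commute)
  qed
  also have "\<dots> = (f s - f m) / (q - 1)"
  proof -
    have "(\<Sum>j\<in>{s..<m}. (f j - f (Suc j))) = - (\<Sum>j = s..<m. (f (Suc j) - f j))"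
      by (simp add: sum_negf[symmetric])
    also have "\<dots> = f s - f m" using sum_Suc_diff'[OF True, of f] by simp
    finally show ?thesis by (simp add: sum_divide_distrib[symmetric])
  qed
  also have "\<dots> \<le> f s / (q - 1)" using q by (intro divide_right_mono) (auto simp: f_def)
  finally show ?thesis by (simp add: f_def)
next
  case False
  hence "{s..<m} = {}" by auto
  thus ?thesis using q by simp
qed



locale rho_ass =
  fixes p :: real and rho :: "nat \<Rightarrow> real"
  assumes p0: "0 < p" and p1: "p < 1"
    and sp: "summable (\<lambda>j. \<bar>rho j\<bar> powr p)" and am: "antimono rho"
begin

definition S where "S = (\<Sum>j. \<bar>rho j\<bar> powr p)"

lemma rho_nonneg: "rho j \<ge> 0"
proof (rule ccontr)
  assume "\<not> rho j \<ge> 0"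
  hence neg: "rho j < 0" by simp
  define c where "c = \<bar>rho j\<bar> powr p"
  have c: "c > 0" using neg by (simp add: c_def)
  have "(\<lambda>i. \<bar>rho i\<bar> powr p) \<longlonglongrightarrow> 0" by (rule summable_LIMSEQ_zero[OF sp])
  hence "eventually (\<lambda>i. \<bar>rho i\<bar> powr p < c) sequentially"
    using c by (auto simp: tendsto_iff dist_real_def elim!: allE[of _ c])
  then obtain N where N: "\<And>i. i \<ge> N \<Longrightarrow> \<bar>rho i\<bar> powr p < c" by (auto simp: eventually_sequentially)
  define i where "i = max N j"
  have "rho i \<le> rho j" using am by (auto simp: i_def antimono_def)
  hence "\<bar>rho j\<bar> \<le> \<bar>rho i\<bar>" using neg by simp
  hence "c \<le> \<bar>rho i\<bar> powr p" unfolding c_def using p0 neg by (intro powr_mono2) auto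
  with N[of i] show False by (simp add: i_def)
qed

lemma S_nonneg: "S \<ge> 0" unfolding S_def by (rule suminf_nonneg[OF sp]) simp

lemma rho_pow_bound: "(real j + 1) * rho j powr p \<le> S"
proof -
  have "(real j + 1) * rho j powr p = (\<Sum>i\<in>{..j}. rho j powr p)" by simp
  also have "\<dots> \<le> (\<Sum>i\<in>{..j}. \<bar>rho i\<bar> powr p)"
  proof (rule sum_mono)
    fix i assume "i \<in> {..j}"
    hence "rho j \<le> rho i" using am by (auto simp: antimono_def)
    thus "rho j powr p \<le> \<bar>rho i\<bar> powr p" using rho_nonneg[of j] p0 by (intro powr_mono2) auto
  qed
  also have "\<dots> \<le> S" unfolding S_def by (rule sum_le_suminf[OF sp]) auto
  finally show ?thesis .
qed

lemma rho_bound: "rho j \<le> S powr (1/p) * (real j + 1) powr (- (1/p))"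
proof -
  have "rho j powr p \<le> S / (real j + 1)" using rho_pow_bound[of j] by (simp add: field_simps)
  hence "(rho j powr p) powr (1/p) \<le> (S / (real j + 1)) powr (1/p)"
    using p0 by (intro powr_mono2) auto
  also have "(rho j powr p) powr (1/p) = rho j"
    using p0 rho_nonneg[of j] by (simp add: powr_powr)
  also have "(S / (real j + 1)) powr (1/p) = S powr (1/p) * (real j + 1) powr (- (1/p))"
    unfolding powr_divide powr_minus by (simp add: divide_inverse)
  finally show ?thesis .
qed

lemma rho_sq: "rho j ^ 2 \<le> S powr (2/p) * (real j + 1) powr (- (2/p))"
proof -
  have "rho j ^ 2 \<le> (S powr (1/p) * (real j + 1) powr (- (1/p))) ^ 2"
    by (rule power_mono[OF rho_bound rho_nonneg])
  also have "\<dots> = S powr (2/p) * (real j + 1) powr (- (2/p))"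
  proof -
    have a: "x powr (1/p) * x powr (1/p) = x powr (2/p)" for x :: real
      by (simp add: powr_add[symmetric])
    have b: "x powr (- (1/p)) * x powr (- (1/p)) = x powr (- (2/p))" for x :: real
      by (simp add: powr_add[symmetric])
    show ?thesis unfolding power_mult_distrib power2_eq_square
      using a[of S] b[of "real j + 1"] by (simp add: ac_simps)
  qed
  finally show ?thesis .
qed

lemma rho_summable: "summable rho"
proof (rule summable_comparison_test)
  show "\<exists>N. \<forall>n\<ge>N. norm (rho n) \<le> S powr (1/p) * (real n + 1) powr (- (1/p))"
    using rho_bound rho_nonneg by auto
  have "summable (\<lambda>n. real n powr (- (1/p)))" using p0 p1 by (subst summable_real_powr_iff) (simp add: field_simps)
  hence "summable (\<lambda>n. real (Suc n) powr (- (1/p)))" by (subst summable_Suc_iff)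
  thus "summable (\<lambda>n. S powr (1/p) * (real n + 1) powr (- (1/p)))"
    by (intro summable_mult) (simp add: add.commute)
qed

end


theorem mainTheorem4:
  fixes p r1 r2 :: real and rho :: "nat \<Rightarrow> real"
  assumes "0 < p" "p < 1" "r1 \<ge> 0" "r2 > 0"
    and "summable (\<lambda>j. \<bar>rho j\<bar> powr p)"
    and "antimono rho"
  shows "\<exists>C>0. \<forall>(C0::real) (g :: (nat \<Rightarrow> real) \<Rightarrow> 'z::{banach, second_countable_topology})
            (D :: (nat \<Rightarrow> nat) \<Rightarrow> (nat \<Rightarrow> real) \<Rightarrow> 'z).
      C0 > 0 \<longrightarrow>
      continuous_on cubeU g \<longrightarrow>
      partial_derivatives g D \<longrightarrow>
      (\<forall>y\<in>cubeU. \<forall>\<nu>\<in>multi_indices.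
         norm (D \<nu> y) \<le> C0 * Gamma (real (mi_order \<nu>) + r1 + 1) * mi_power (\<lambda>j. r2 * rho j) \<nu>) \<longrightarrow>
      (\<forall>s::nat. s \<ge> 1 \<longrightarrow>
         norm (\<integral>y. (g y - g (trunc s y)) \<partial>cube_measure) \<le> C0 * C * real s powr (1 - 2 / p))"
proof -
  interpret R: rho_ass p rho using assms by unfold_locales auto
  have q: "2 / p > 1" using assms(1,2) by (simp add: field_simps)
  have G3: "Gamma (r1 + 3) > 0" using assms(3) by (intro Gamma_real_pos) auto
  define K where "K = Gamma (r1 + 3) * r2^2 * R.S powr (2/p) / (4 * (2/p - 1))"
  have K0: "K \<ge> 0" unfolding K_def using q G3 by (intro divide_nonneg_pos mult_nonneg_nonneg) auto
  show ?thesis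
  proof (intro exI[of _ "K + 1"] conjI allI impI)
    show "K + 1 > 0" using K0 by simp
    fix C0 :: real and g :: "(nat \<Rightarrow> real) \<Rightarrow> 'z" and D :: "(nat \<Rightarrow> nat) \<Rightarrow> (nat \<Rightarrow> real) \<Rightarrow> 'z" and s :: nat
    assume C0: "C0 > 0" and cont: "continuous_on cubeU g" and pd: "partial_derivatives g D"
      and bd: "\<forall>y\<in>cubeU. \<forall>\<nu>\<in>multi_indices.
         norm (D \<nu> y) \<le> C0 * Gamma (real (mi_order \<nu>) + r1 + 1) * mi_power (\<lambda>j. r2 * rho j) \<nu>"
      and s: "s \<ge> 1"
    interpret setting C0 r1 r2 rho g D
      by unfold_locales (use C0 cont pd bd assms(3) R.rho_nonneg in auto)
    have sL: "summable L"
    proof -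
      have "L = (\<lambda>j. (C0 * Gamma (r1 + 2) * r2) * rho j)"
        using R.rho_nonneg assms(4) by (auto simp: L_def fun_eq_iff abs_mult)
      thus ?thesis using summable_mult[OF R.rho_summable] by simp
    qed
    define c where "c = C0 * Gamma (r1 + 3) * r2^2"
    have c0: "c \<ge> 0" unfolding c_def using C0 G3 by simp
    define W where "W = c * (R.S powr (2/p) * (real s powr (1 - 2/p) / (2/p - 1)))"
    have W: "(\<Sum>j\<in>{s..<m}. Q j) \<le> W" if "s \<le> m" for m
    proof -
      have "(\<Sum>j\<in>{s..<m}. Q j) = c * (\<Sum>j\<in>{s..<m}. rho j ^ 2)"
        by (simp add: Q_def c_def sum_distrib_left power_mult_distrib ac_simps)
      also have "\<dots> \<le> c * (\<Sum>j\<in>{s..<m}. R.S powr (2/p) * (real j + 1) powr (- (2/p)))"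
        by (intro mult_left_mono sum_mono R.rho_sq c0)
      also have "\<dots> = c * (R.S powr (2/p) * (\<Sum>j\<in>{s..<m}. (real j + 1) powr (- (2/p))))"
        by (simp add: sum_distrib_left)
      also have "\<dots> \<le> W" unfolding W_def
        using sum_bound[OF q s, of m] c0
        by (intro mult_left_mono) auto
      finally show ?thesis .
    qed
    have "norm (\<integral>y. g y - g (trunc s y) \<partial>cube_measure) \<le> W / 4" by (rule final_local[OF sL W])
    also have "W / 4 = C0 * K * real s powr (1 - 2 / p)"
      unfolding W_def c_def K_def by (simp add: field_simps)
    also have "\<dots> \<le> C0 * (K + 1) * real s powr (1 - 2 / p)"
      using C0 by (intro mult_right_mono) auto
    finally show "norm (\<integral>y. g y - g (trunc s y) \<partial>cube_measure) \<le> C0 * (K + 1) * real s powr (1 - 2 / p)" .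
  qed
qed


end
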